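(* Let $d\ge1$, $n\ge1$ be integers and let $g$ be a real form of degree $2n$ in $d$ variables with $g(\mathbf{x})\ge0$ for all $\mathbf{x}\in\mathbb{R}^d$ and $g(\mathbf{x})=0$ only if $\mathbf{x}=0$. Let $d\mu=\exp(-g(\mathbf{x}))\,d\mathbf{x}$, let $c^*>0$ be defined by $1/c^*=\int_{\mathbb{R}^d}\exp(-g(\mathbf{x}))\,d\mathbf{x}$, let $\mathbf{v}_{2n}(\mathbf{x})=(\mathbf{x}^{\boldsymbol{\alpha}})_{\boldsymbol{\alpha}\in\mathbb{N}^d_{2n}}$ be the vector of all degree-$2n$ monomials, and $\boldsymbol{\mu}^{(2n)}:=\int\mathbf{v}_{2n}(\mathbf{x})\,d\mu(\mathbf{x})$. Consider the problem \[\tau=\min_{0<q\in L^1(\mathbb{R}^d)}\Big\{\int_{\mathbb{R}^d}q(\mathbf{x})\ln q(\mathbf{x})\,d\mathbf{x}:\ \int_{\mathbb{R}^d}q(\mathbf{x})\,d\mathbf{x}=1,\ \int_{\mathbb{R}^d}\mathbf{v}_{2n}(\mathbf{x})\,q(\mathbf{x})\,d\mathbf{x}=c^*\boldsymbol{\mu}^{(2n)}\Big\},\] where the minimum is over Lebesgue-integrable, everywhere positive functions $q$. Then $q^*(\mathbf{x}):=c^*\exp(-g(\mathbf{x}))$ is the unique optimal solution of this problem.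
   Context: $\mathbb{N}^d_{2n}=\{\boldsymbol{\alpha}\in\mathbb{N}^d:\sum_i\alpha_i=2n\}$. *)

theory Defs
  imports "HOL-Analysis.Analysis"
begin

definition multi_indices :: "nat \<Rightarrow> ('d::finite \<Rightarrow> nat) set" where
  "multi_indices k = {\<alpha>. (\<Sum>i\<in>UNIV. \<alpha> i) = k}"

definition monom :: "('d::finite \<Rightarrow> nat) \<Rightarrow> real^'d \<Rightarrow> real" where
  "monom \<alpha> x = (\<Prod>i\<in>UNIV. (x $ i) ^ \<alpha> i)"

definition is_form :: "(real^'d::finite \<Rightarrow> real) \<Rightarrow> nat \<Rightarrow> bool" where
  "is_form g k \<longleftrightarrow> (\<exists>c :: ('d \<Rightarrow> nat) \<Rightarrow> real.
      \<forall>x. g x = (\<Sum>\<alpha>\<in>multi_indices k. c \<alpha> * monom \<alpha> x))"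

end

theory Submission imports Defs "HOL-Real_Asymp.Real_Asymp" begin

lemma summable_pow_exp:
  assumes "m > 0"
  shows "summable (\<lambda>N::nat. real N ^ q * exp (- m * real N))"
proof (rule summable_comparison_test_bigo)
  show "summable (\<lambda>n. norm (1 / real n ^ 2))"
    using inverse_power_summable[of 2, where 'a=real] by (simp add: divide_inverse)
  show "(\<lambda>N::nat. real N ^ q * exp (- m * real N)) \<in> O(\<lambda>N. 1 / real N ^ 2)"
    using assms by real_asymp
qed

lemma integrable_norm_pow_exp:
  fixes m :: real
  assumes m: "m > 0"
  shows "integrable lborel (\<lambda>x::'a::euclidean_space. norm x ^ p * exp (- m * norm x))"
proof (rule integrableI_bounded)
  let ?f = "\<lambda>x::'a. norm x ^ p * exp (- m * norm x)"
  show "?f \<in> borel_measurable lborel"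
    by measurable
  define V where "V = unit_ball_vol (DIM('a))"
  define b where "b = (\<lambda>N::nat. real N ^ p * (exp m * exp (- m * real N)))"
  have b0: "b N \<ge> 0" for N unfolding b_def by simp
  have pt: "ennreal (norm (?f x)) \<le> (\<Sum>N. ennreal (b N) * indicator (cball (0::'a) (real N)) x)" for x
  proof -
    define N where "N = nat \<lceil>norm x\<rceil>"
    have N1: "norm x \<le> real N" unfolding N_def by linarith
    have N2: "real N < norm x + 1" unfolding N_def
      using ceiling_correct[of "norm x"] norm_ge_zero[of x] by (simp add: of_nat_nat)
    have "norm (?f x) = ?f x" by simp
    also have "\<dots> \<le> b N" unfolding b_def
    proof (rule mult_mono)
      show "norm x ^ p \<le> real N ^ p" using N1 by (simp add: power_mono)
      have "exp (- m * norm x) \<le> exp (m - m * real N)"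
      proof -
        have "m * real N \<le> m * (norm x + 1)" using N2 m by (intro mult_left_mono) auto
        then show ?thesis by (simp add: algebra_simps)
      qed
      then show "exp (- m * norm x) \<le> exp m * exp (- m * real N)"
        by (simp add: exp_diff[symmetric] exp_add[symmetric])
    qed auto
    finally have "ennreal (norm (?f x)) \<le> ennreal (b N) * indicator (cball (0::'a) (real N)) x"
      using N1 by (simp add: indicator_def ennreal_leI)
    also have "\<dots> \<le> (\<Sum>n<Suc N. ennreal (b n) * indicator (cball (0::'a) (real n)) x)"
      by (rule member_le_sum) auto
    also have "\<dots> \<le> (\<Sum>N. ennreal (b N) * indicator (cball (0::'a) (real N)) x)"
      by (rule sum_le_suminf) (auto intro: summableI)
    finally show ?thesis .
  qed
  have "(\<integral>\<^sup>+x. ennreal (norm (?f x)) \<partial>lborel) \<le>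
        (\<integral>\<^sup>+x. (\<Sum>N. ennreal (b N) * indicator (cball (0::'a) (real N)) x) \<partial>lborel)"
    using pt by (simp add: nn_integral_mono)
  also have "\<dots> = (\<Sum>N. \<integral>\<^sup>+x. ennreal (b N) * indicator (cball (0::'a) (real N)) x \<partial>lborel)"
    by (rule nn_integral_suminf) (auto intro!: borel_measurable_indicator measurable_compose[OF _ borel_measurable_times_ennreal])
  also have "\<dots> = (\<Sum>N. ennreal (b N * (V * real N ^ DIM('a))))"
    by (simp add: nn_integral_cmult_indicator emeasure_cball V_def ennreal_mult b0)
  also have "\<dots> = ennreal (\<Sum>N. b N * (V * real N ^ DIM('a)))"
  proof (rule suminf_ennreal2)
    show "0 \<le> b N * (V * real N ^ DIM('a))" for N using b0 by (simp add: V_def)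
    have "summable (\<lambda>N::nat. (exp m * V) * (real N ^ (p + DIM('a)) * exp (- m * real N)))"
      by (intro summable_mult summable_pow_exp m)
    then show "summable (\<lambda>N. b N * (V * real N ^ DIM('a)))"
      by (simp add: b_def power_add mult_ac)
  qed
  also have "\<dots> < \<infinity>" by simp
  finally show "(\<integral>\<^sup>+x. ennreal (norm (?f x)) \<partial>lborel) < \<infinity>" .
qed

lemma finite_multi_indices: "finite (multi_indices k :: ('d::finite \<Rightarrow> nat) set)"
proof -
  have "multi_indices k \<subseteq> PiE (UNIV::'d set) (\<lambda>_. {..k})"
  proof
    fix \<alpha> :: "'d \<Rightarrow> nat" assume "\<alpha> \<in> multi_indices k"
    then have s: "(\<Sum>i\<in>UNIV. \<alpha> i) = k" by (simp add: multi_indices_def)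
    have "\<alpha> i \<le> k" for i using member_le_sum[of i UNIV \<alpha>] s by simp
    then show "\<alpha> \<in> PiE UNIV (\<lambda>_. {..k})" by auto
  qed
  moreover have "finite (PiE (UNIV::'d set) (\<lambda>_. {..k}))" by (intro finite_PiE) auto
  ultimately show ?thesis by (rule finite_subset)
qed

lemma monom_scale: "monom \<alpha> (c *\<^sub>R x) = c ^ (\<Sum>i\<in>UNIV. \<alpha> i) * monom \<alpha> x"
  by (simp add: monom_def power_mult_distrib prod.distrib power_sum)

lemma monom_cont: "continuous_on UNIV (monom \<alpha>)"
  unfolding monom_def by (intro continuous_intros)

lemma monom_bound: "\<bar>monom \<alpha> x\<bar> \<le> norm x ^ (\<Sum>i\<in>UNIV. \<alpha> i)"
proof -
  have "\<bar>monom \<alpha> x\<bar> = (\<Prod>i\<in>UNIV. \<bar>x $ i\<bar> ^ \<alpha> i)"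
    by (simp add: monom_def abs_prod power_abs)
  also have "\<dots> \<le> (\<Prod>i\<in>UNIV. norm x ^ \<alpha> i)"
    by (intro prod_mono conjI power_mono) (auto simp: component_le_norm_cart)
  also have "\<dots> = norm x ^ (\<Sum>i\<in>UNIV. \<alpha> i)" by (simp add: power_sum)
  finally show ?thesis .
qed

lemma exp_pow_bound:
  fixes t m :: real assumes "t \<ge> 0" "k \<ge> 1" "m > 0"
  shows "exp (- m * t ^ k) \<le> exp m * exp (- m * t)"
proof (cases "t \<le> 1")
  case True
  have "exp (- m * t ^ k) \<le> 1" using assms by simp
  also have "1 \<le> exp (m - m * t)" using True assms by simp
  finally show ?thesis by (simp add: exp_diff exp_minus field_simps)
next
  case False
  then have "t \<le> t ^ k" using assms by (metis less_eq_real_def not_le power_increasing power_one_right)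
  then have "exp (- m * t ^ k) \<le> exp (- m * t)" using assms by simp
  also have "\<dots> \<le> exp m * exp (- m * t)" using assms by simp
  finally show ?thesis .
qed

lemma form_props:
  fixes g :: "real^'d \<Rightarrow> real"
  assumes f: "is_form g k" and k: "k \<ge> 1" and nn: "\<forall>x. g x \<ge> 0" and z: "\<forall>x. g x = 0 \<longrightarrow> x = 0"
  shows "continuous_on UNIV g" "\<exists>m>0. \<forall>x. g x \<ge> m * norm x ^ k"
proof -
  from f obtain c where gx: "\<And>x. g x = (\<Sum>\<alpha>\<in>multi_indices k. c \<alpha> * monom \<alpha> x)"
    unfolding is_form_def by blast
  have geq: "g = (\<lambda>x. \<Sum>\<alpha>\<in>multi_indices k. c \<alpha> * monom \<alpha> x)" using gx by auto
  show gc: "continuous_on UNIV g" unfolding geq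
    by (intro continuous_intros continuous_on_compose2[OF monom_cont]) auto
  have hom: "g (t *\<^sub>R x) = t ^ k * g x" for t x
    unfolding gx monom_scale sum_distrib_left
    by (intro sum.cong) (auto simp: multi_indices_def)
  obtain i :: 'd where True by blast
  have ne: "sphere (0::real^'d) 1 \<noteq> {}"
    using norm_axis_1[of i] by (auto intro!: exI[of _ "axis i 1"])
  obtain x0 where x0: "x0 \<in> sphere 0 1" "\<And>y. y \<in> sphere 0 1 \<Longrightarrow> g x0 \<le> g y"
    using continuous_attains_inf[OF compact_sphere ne continuous_on_subset[OF gc]] by blast
  have "x0 \<noteq> 0" using x0 by auto
  then have mpos: "g x0 > 0" using nn z by (metis less_eq_real_def)
  have "g x0 * norm x ^ k \<le> g x" for x
  proof (cases "x = 0")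
    case True then show ?thesis using k nn by (simp add: power_0_left)
  next
    case False
    have "g x = g (norm x *\<^sub>R (x /\<^sub>R norm x))" using False by simp
    also have "\<dots> = norm x ^ k * g (x /\<^sub>R norm x)" by (rule hom)
    finally have "g x = norm x ^ k * g (x /\<^sub>R norm x)" .
    moreover have "g x0 \<le> g (x /\<^sub>R norm x)" using False by (intro x0(2)) simp
    ultimately show ?thesis by (metis mult.commute mult_left_mono norm_ge_zero zero_le_power)
  qed
  then show "\<exists>m>0. \<forall>x. g x \<ge> m * norm x ^ k" using mpos by blast
qed

theorem lemma2p5:
  fixes g :: "real^'d \<Rightarrow> real" and n :: nat
  assumes "n \<ge> 1"
    and "is_form g (2 * n)"
    and "\<forall>x. g x \<ge> 0"
    and "\<forall>x. g x = 0 \<longrightarrow> x = 0"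
  defines "cs \<equiv> 1 / (\<integral>x. exp (- g x) \<partial>lborel)"
  defines "qs \<equiv> (\<lambda>x. cs * exp (- g x))"
  defines "feasible \<equiv> (\<lambda>q :: real^'d \<Rightarrow> real.
      (\<forall>x. q x > 0) \<and> integrable lborel q \<and> (\<integral>x. q x \<partial>lborel) = 1 \<and>
      (\<forall>\<alpha>\<in>multi_indices (2 * n).
          integrable lborel (\<lambda>x. monom \<alpha> x * q x) \<and>
          (\<integral>x. monom \<alpha> x * q x \<partial>lborel) = cs * (\<integral>x. monom \<alpha> x * exp (- g x) \<partial>lborel)))"
  shows "feasible qs \<and> integrable lborel (\<lambda>x. qs x * ln (qs x)) \<and>
    (\<forall>q. feasible q \<and> integrable lborel (\<lambda>x. q x * ln (q x)) \<longrightarrow>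
        (\<integral>x. qs x * ln (qs x) \<partial>lborel) \<le> (\<integral>x. q x * ln (q x) \<partial>lborel) \<and>
        ((\<integral>x. q x * ln (q x) \<partial>lborel) = (\<integral>x. qs x * ln (qs x) \<partial>lborel)
            \<longrightarrow> (AE x in lborel. q x = qs x)))"
proof -
  define MI where "MI = (multi_indices (2 * n) :: ('d \<Rightarrow> nat) set)"
  have finMI: "finite MI" unfolding MI_def by (rule finite_multi_indices)
  from assms(2) obtain c where gx: "\<And>x. g x = (\<Sum>\<alpha>\<in>MI. c \<alpha> * monom \<alpha> x)"
    unfolding is_form_def MI_def by blast
  have k1: "2 * n \<ge> 1" using assms(1) by simp
  note fp = form_props[OF assms(2) k1 assms(3) assms(4)]
  obtain m where m: "m > 0" "\<And>x. g x \<ge> m * norm x ^ (2 * n)" using fp(2) by blast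
  have gmeas: "g \<in> borel_measurable lborel"
    using borel_measurable_continuous_onI[OF fp(1)] by (simp add: measurable_lborel2)
  have mmeas: "monom \<alpha> \<in> borel_measurable lborel" for \<alpha> :: "'d \<Rightarrow> nat"
    using borel_measurable_continuous_onI[OF monom_cont] by (simp add: measurable_lborel2)
  have sumMI: "(\<Sum>i\<in>UNIV. \<alpha> i) = 2 * n" if "\<alpha> \<in> MI" for \<alpha>
    using that by (simp add: MI_def multi_indices_def)
  have ebound: "exp (- g x) \<le> exp (- m * norm x ^ (2 * n))" for x
    using m(2)[of x] by simp
  have int_e: "integrable lborel (\<lambda>x. exp (- g x))"
  proof (rule Bochner_Integration.integrable_bound)
    show "integrable lborel (\<lambda>x::real^'d. exp m * (norm x ^ 0 * exp (- m * norm x)))"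
      by (intro integrable_mult_right integrable_norm_pow_exp m)
    show "(\<lambda>x. exp (- g x)) \<in> borel_measurable lborel" using gmeas by measurable
    show "AE x in lborel. norm (exp (- g x)) \<le> norm (exp m * (norm x ^ 0 * exp (- m * norm x)))"
    proof (rule AE_I2)
      fix x :: "real^'d"
      have "exp (- g x) \<le> exp m * exp (- m * norm x)"
        using ebound[of x] exp_pow_bound[of "norm x" "2 * n" m, OF norm_ge_zero k1 m(1)] by linarith
      then show "norm (exp (- g x)) \<le> norm (exp m * (norm x ^ 0 * exp (- m * norm x)))" by simp
    qed
  qed
  have int_me: "integrable lborel (\<lambda>x. monom \<alpha> x * exp (- g x))" if "\<alpha> \<in> MI" for \<alpha>
  proof (rule Bochner_Integration.integrable_bound)
    show "integrable lborel (\<lambda>x::real^'d. exp m * (norm x ^ (2 * n) * exp (- m * norm x)))"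
      by (intro integrable_mult_right integrable_norm_pow_exp m)
    show "(\<lambda>x. monom \<alpha> x * exp (- g x)) \<in> borel_measurable lborel" using gmeas mmeas by measurable
    show "AE x in lborel. norm (monom \<alpha> x * exp (- g x)) \<le> norm (exp m * (norm x ^ (2 * n) * exp (- m * norm x)))"
    proof (rule AE_I2)
      fix x :: "real^'d"
      have "exp (- g x) \<le> exp m * exp (- m * norm x)"
        using ebound[of x] exp_pow_bound[of "norm x" "2 * n" m, OF norm_ge_zero k1 m(1)] by linarith
      moreover have "\<bar>monom \<alpha> x\<bar> \<le> norm x ^ (2 * n)" using monom_bound[of \<alpha> x] sumMI[OF that] by simp
      ultimately have "\<bar>monom \<alpha> x\<bar> * exp (- g x) \<le> norm x ^ (2 * n) * (exp m * exp (- m * norm x))"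
        by (intro mult_mono) auto
      then show "norm (monom \<alpha> x * exp (- g x)) \<le> norm (exp m * (norm x ^ (2 * n) * exp (- m * norm x)))"
        by (simp add: abs_mult mult_ac)
    qed
  qed
  define I where "I = (\<integral>x. exp (- g x) \<partial>lborel)"
  have I0: "I \<ge> 0" unfolding I_def by simp
  have Ipos: "I > 0"
  proof (rule ccontr)
    assume "\<not> I > 0"
    then have "I = 0" using I0 by simp
    then have "AE x in lborel. exp (- g x) = 0"
      using integral_nonneg_eq_0_iff_AE[OF int_e] unfolding I_def by simp
    then obtain N where N0: "{x\<in>space lborel. \<not> exp (- g x) = 0} \<subseteq> N"
        "emeasure lborel N = 0" "N \<in> sets lborel"
      by (rule AE_E)
    then have N: "N \<in> null_sets lborel" "UNIV \<subseteq> N" by auto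
    then have "emeasure lborel (UNIV :: (real^'d) set) \<le> emeasure lborel N"
      using N(1) by (intro emeasure_mono) auto
    then show False using N0(2) by simp
  qed
  have cs: "cs = 1 / I" unfolding cs_def I_def ..
  have cspos: "cs > 0" using Ipos cs by simp
  define G where "G = (\<lambda>x. g x * exp (- g x))"
  have Geq: "G x = (\<Sum>\<alpha>\<in>MI. c \<alpha> * (monom \<alpha> x * exp (- g x)))" for x
    unfolding G_def gx sum_distrib_right by (simp add: mult_ac)
  have int_G: "integrable lborel G"
    unfolding Geq by (intro Bochner_Integration.integrable_sum integrable_mult_right int_me)
  have intG: "(\<integral>x. G x \<partial>lborel) = (\<Sum>\<alpha>\<in>MI. c \<alpha> * (\<integral>x. monom \<alpha> x * exp (- g x) \<partial>lborel))"
    unfolding Geq using int_me by (simp add: Bochner_Integration.integral_sum integrable_mult_right)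
  have qs_ln: "qs x * ln (qs x) = cs * ln cs * exp (- g x) - cs * G x" for x
    using cspos by (simp add: qs_def G_def ln_mult algebra_simps)
  have int_qsln: "integrable lborel (\<lambda>x. qs x * ln (qs x))"
    unfolding qs_ln by (intro Bochner_Integration.integrable_diff integrable_mult_right int_e int_G)
  define E where "E = ln cs - cs * (\<integral>x. G x \<partial>lborel)"
  have intqsln: "(\<integral>x. qs x * ln (qs x) \<partial>lborel) = E"
    unfolding qs_ln E_def using int_e int_G Ipos cs
    by (simp add: I_def[symmetric])
  have feas_qs: "feasible qs"
    unfolding feasible_def
  proof (intro conjI ballI allI)
    show "qs x > 0" for x using cspos by (simp add: qs_def)
    show "integrable lborel qs" unfolding qs_def by (intro integrable_mult_right int_e)
    show "(\<integral>x. qs x \<partial>lborel) = 1" unfolding qs_def using Ipos cs by (simp add: I_def[symmetric])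
    fix \<alpha> :: "'d \<Rightarrow> nat" assume a: "\<alpha> \<in> multi_indices (2 * n)"
    have eq: "(\<lambda>x. monom \<alpha> x * qs x) = (\<lambda>x. cs * (monom \<alpha> x * exp (- g x)))"
      by (auto simp: qs_def)
    show "integrable lborel (\<lambda>x. monom \<alpha> x * qs x)"
      unfolding eq using a int_me MI_def by (intro integrable_mult_right) auto
    show "(\<integral>x. monom \<alpha> x * qs x \<partial>lborel) = cs * (\<integral>x. monom \<alpha> x * exp (- g x) \<partial>lborel)"
      unfolding eq by simp
  qed
  have main: "E \<le> (\<integral>x. q x * ln (q x) \<partial>lborel) \<and>
        ((\<integral>x. q x * ln (q x) \<partial>lborel) = E \<longrightarrow> (AE x in lborel. q x = qs x))"
    if fq: "feasible q" and iq: "integrable lborel (\<lambda>x. q x * ln (q x))" for q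
  proof -
    have qpos: "\<And>x. q x > 0" and qint: "integrable lborel q" and q1: "(\<integral>x. q x \<partial>lborel) = 1"
      and qm: "\<And>\<alpha>. \<alpha> \<in> MI \<Longrightarrow> integrable lborel (\<lambda>x. monom \<alpha> x * q x)"
      and qmi: "\<And>\<alpha>. \<alpha> \<in> MI \<Longrightarrow> (\<integral>x. monom \<alpha> x * q x \<partial>lborel) = cs * (\<integral>x. monom \<alpha> x * exp (- g x) \<partial>lborel)"
      using fq unfolding feasible_def MI_def by auto
    have qgeq: "q x * g x = (\<Sum>\<alpha>\<in>MI. c \<alpha> * (monom \<alpha> x * q x))" for x
      unfolding gx sum_distrib_left by (simp add: mult_ac)
    have int_qg: "integrable lborel (\<lambda>x. q x * g x)"
      unfolding qgeq by (intro Bochner_Integration.integrable_sum integrable_mult_right qm)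
    have intqg: "(\<integral>x. q x * g x \<partial>lborel) = cs * (\<integral>x. G x \<partial>lborel)"
      unfolding qgeq intG using qm qmi
      by (simp add: Bochner_Integration.integral_sum integrable_mult_right sum_distrib_left mult_ac)
    have qlqs: "q x * ln (qs x) = ln cs * q x - q x * g x" for x
      using cspos by (simp add: qs_def ln_mult algebra_simps)
    have int_qlqs: "integrable lborel (\<lambda>x. q x * ln (qs x))"
      unfolding qlqs by (intro Bochner_Integration.integrable_diff integrable_mult_right qint int_qg)
    have intqlqs: "(\<integral>x. q x * ln (qs x) \<partial>lborel) = E"
      unfolding qlqs E_def using qint int_qg q1 intqg by simp
    define h where "h = (\<lambda>x. q x * ln (q x) - q x * ln (qs x) - q x + qs x)"
    have qspos: "qs x > 0" for x using cspos by (simp add: qs_def)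
    have hnn: "h x \<ge> 0" for x
    proof -
      have "ln (qs x / q x) \<le> qs x / q x - 1" using qpos[of x] qspos[of x] by (intro ln_le_minus_one) simp
      then have "q x * ln (qs x / q x) \<le> q x * (qs x / q x - 1)" using qpos[of x] by (intro mult_left_mono) auto
      then show ?thesis using qpos[of x] qspos[of x]
        by (simp add: h_def ln_div right_diff_distrib)
    qed
    have int_h: "integrable lborel h"
      unfolding h_def
      by (intro Bochner_Integration.integrable_add Bochner_Integration.integrable_diff iq int_qlqs qint)
         (simp add: qs_def integrable_mult_right int_e)
    have inth: "(\<integral>x. h x \<partial>lborel) = (\<integral>x. q x * ln (q x) \<partial>lborel) - E"
    proof -
      have iqs: "integrable lborel qs" using feas_qs unfolding feasible_def by simp
      have "(\<integral>x. qs x \<partial>lborel) = 1" using feas_qs unfolding feasible_def by simp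
      then show ?thesis unfolding h_def using iq int_qlqs qint iqs intqlqs q1
        by (simp add: Bochner_Integration.integral_add Bochner_Integration.integral_diff)
    qed
    have h0: "(\<integral>x. h x \<partial>lborel) \<ge> 0" using hnn by (simp add: integral_nonneg)
    show ?thesis
    proof (intro conjI impI)
      show "E \<le> (\<integral>x. q x * ln (q x) \<partial>lborel)" using h0 inth by simp
      assume "(\<integral>x. q x * ln (q x) \<partial>lborel) = E"
      then have "(\<integral>x. h x \<partial>lborel) = 0" using inth by simp
      then have "AE x in lborel. h x = 0"
        using integral_nonneg_eq_0_iff_AE[OF int_h] hnn by simp
      then show "AE x in lborel. q x = qs x"
      proof (rule AE_mp, intro AE_I2 impI)
        fix x assume hx: "h x = 0"
        define t where "t = qs x / q x"
        have tpos: "t > 0" using qpos[of x] qspos[of x] by (simp add: t_def)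
        have "q x * (ln t - (t - 1)) = - h x"
          using qpos[of x] qspos[of x] by (simp add: h_def t_def ln_div algebra_simps)
        then have "ln t = t - 1" using hx qpos[of x] by simp
        then have "t = 1" using ln_eq_minus_one tpos by blast
        then show "q x = qs x" using qpos[of x] by (simp add: t_def)
      qed
    qed
  qed
  show ?thesis using feas_qs int_qsln main intqsln by simp
qed

end
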